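(* Let $G$ be a finite solvable group and let $\psi\neq 1_G$ be a non-trivial ordinary $S$-character of $G$. Then there exists an element $g\in G$ of prime power order $p^k$ ($p$ prime, $k\ge1$) with $\psi(g)=0$.
   Context: An $S$-character of a finite group $G$ is a virtual character $\psi$ (integral linear combination of irreducible complex characters) such that the trivial character $1_G$ occurs in $\psi$ with multiplicity exactly one and $\psi(g)$ is a non-negative real number for all $g\in G$. It is called ordinary if it is an actual character, i.e. all multiplicities of irreducible constituents are non-negative. *)

theory Defs
  imports "HOL-Algebra.Solvable_Groups" "HOL-Algebra.Multiplicative_Group" "Jordan_Normal_Form.Matrix"
begin

definition is_rep :: "('a, 'b) monoid_scheme \<Rightarrow> nat \<Rightarrow> ('a \<Rightarrow> complex mat) \<Rightarrow> bool" where
  "is_rep G n \<rho> \<longleftrightarrow>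
     (\<forall>g\<in>carrier G. \<rho> g \<in> carrier_mat n n) \<and>
     \<rho> \<one>\<^bsub>G\<^esub> = 1\<^sub>m n \<and>
     (\<forall>g\<in>carrier G. \<forall>h\<in>carrier G. \<rho> (g \<otimes>\<^bsub>G\<^esub> h) = \<rho> g * \<rho> h)"

definition mat_trace :: "complex mat \<Rightarrow> complex" where
  "mat_trace A = (\<Sum>i<dim_row A. A $$ (i, i))"

definition is_character :: "('a, 'b) monoid_scheme \<Rightarrow> ('a \<Rightarrow> complex) \<Rightarrow> bool" where
  "is_character G \<chi> \<longleftrightarrow>
     (\<exists>n \<rho>. is_rep G n \<rho> \<and> (\<forall>g\<in>carrier G. \<chi> g = mat_trace (\<rho> g)))"

text \<open>The standard inner product of class functions; the multiplicity of an
  irreducible character chi in psi is char_inner G psi chi.\<close>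
definition char_inner :: "('a, 'b) monoid_scheme \<Rightarrow> ('a \<Rightarrow> complex) \<Rightarrow> ('a \<Rightarrow> complex) \<Rightarrow> complex" where
  "char_inner G \<alpha> \<beta> = (\<Sum>g\<in>carrier G. \<alpha> g * cnj (\<beta> g)) / of_nat (order G)"

definition ordinary_S_character :: "('a, 'b) monoid_scheme \<Rightarrow> ('a \<Rightarrow> complex) \<Rightarrow> bool" where
  "ordinary_S_character G \<psi> \<longleftrightarrow>
     is_character G \<psi> \<and>
     char_inner G \<psi> (\<lambda>_. 1) = 1 \<and>
     (\<forall>g\<in>carrier G. \<psi> g \<in> \<real> \<and> 0 \<le> Re (\<psi> g))"

end

theory Submission
  imports Defs "Jordan_Normal_Form.Schur_Decomposition" "HOL-Number_Theory.Cong"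
begin

lemma geom_root_sum:
  fixes z :: complex
  assumes "z ^ p = 1" "z \<noteq> 1"
  shows "(\<Sum>t\<in>{1..p}. z ^ t) = 0"
proof -
  have "(\<Sum>t<p. z ^ t) = 0" using assms by (simp add: sum_gp_strict)
  moreover have "(\<Sum>t\<in>{1..p}. z ^ t) = z * (\<Sum>t<p. z ^ t)"
  proof -
    have "(\<Sum>t\<in>{1..p}. z ^ t) = (\<Sum>t<p. z ^ Suc t)"
      using sum.atLeast1_atMost_eq[of "\<lambda>t. z^t" p] by simp
    thus ?thesis by (simp add: sum_distrib_left)
  qed
  ultimately show ?thesis by simp
qed

lemma powsum_count:
  fixes L :: "complex list" and c :: complex
  assumes "\<forall>\<mu>\<in>set L. \<mu>^(p+1) = \<mu>" "c ^ p = 1" "p \<ge> 1"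
  shows "(\<Sum>t\<in>{1..p}. c^t * (\<Sum>\<mu>\<leftarrow>L. \<mu>^t)) = of_nat p * of_nat (length (filter (\<lambda>\<mu>. c*\<mu> = 1) L))"
  using assms(1)
proof (induction L)
  case Nil
  then show ?case by simp
next
  case (Cons \<mu> L)
  have IH: "(\<Sum>t\<in>{1..p}. c^t * (\<Sum>\<mu>\<leftarrow>L. \<mu>^t)) = of_nat p * of_nat (length (filter (\<lambda>\<mu>. c*\<mu> = 1) L))"
    using Cons.IH Cons.prems by (meson list.set_intros(2))
  have split: "(\<Sum>t\<in>{1..p}. c^t * (\<Sum>\<mu>\<leftarrow>\<mu>#L. \<mu>^t)) = (\<Sum>t\<in>{1..p}. (c*\<mu>)^t) + (\<Sum>t\<in>{1..p}. c^t * (\<Sum>\<mu>\<leftarrow>L. \<mu>^t))"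
    by (simp only: list.map sum_list.Cons distrib_left sum.distrib power_mult_distrib)
  have one: "(\<Sum>t\<in>{1..p}. (c*\<mu>)^t) = (if c*\<mu> = 1 then of_nat p else 0)"
  proof (cases "\<mu> = 0")
    case True
    then show ?thesis using assms by (auto intro!: sum.neutral)
  next
    case False
    have "\<mu>^(p+1) = \<mu>" using Cons.prems by simp
    hence "\<mu>^p = 1" using False by (simp add: power_Suc2 del: power_Suc)
    hence "(c*\<mu>)^p = 1" using assms by (simp add: power_mult_distrib)
    show ?thesis
    proof (cases "c*\<mu> = 1")
      case True
      then show ?thesis by simp
    next
      case False
      then show ?thesis using geom_root_sum[of "c*\<mu>" p] \<open>(c*\<mu>)^p = 1\<close> by simp
    qed
  qed
  show ?case unfolding split one IH by (cases "c*\<mu> = 1") (simp_all add: distrib_left)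
qed

lemma int_powsum:
  fixes L :: "complex list" and p :: nat
  assumes p2: "p \<ge> 2" and root: "\<forall>\<mu>\<in>set L. \<mu>^(p+1) = \<mu>"
    and sym: "\<forall>t\<in>{1..<p}. (\<Sum>\<mu>\<leftarrow>L. \<mu>^t) = (\<Sum>\<mu>\<leftarrow>L. \<mu>)"
  shows "(\<Sum>\<mu>\<leftarrow>L. \<mu>) \<in> \<int>"
proof -
  define c where "c = cis (2 * pi / p)"
  have cp: "c ^ p = 1" unfolding c_def using p2 by (simp add: DeMoivre)
  have c1: "c \<noteq> 1"
  proof
    assume "c = 1"
    hence "Re c = 1" by simp
    hence "cos (2*pi/p) = 1" unfolding c_def by simp
    hence "\<exists>n::int. 2*pi/p = of_int n * 2 * pi" using cos_one_2pi_int[of "2*pi/p"] by blast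
    then obtain n :: int where n: "2*pi/p = of_int n * 2 * pi" by blast
    have "real_of_int n = 1 / real p" using n p2 by (simp add: field_simps)
    moreover have "0 < 1 / real p" "1 / real p < 1" using p2 by auto
    ultimately have "0 < n" "n < 1" by linarith+
    thus False by linarith
  qed
  define S where "S = (\<lambda>t. (\<Sum>\<mu>\<leftarrow>L. \<mu>^t))"
  have Sp: "S p = of_nat (length (filter (\<lambda>\<mu>. \<mu> \<noteq> 0) L))"
    unfolding S_def using root
  proof (induction L)
    case (Cons \<mu> L)
    have "\<mu>^(p+1) = \<mu>" using Cons.prems by simp
    hence "\<mu> \<noteq> 0 \<Longrightarrow> \<mu>^p = 1" by (simp add: power_Suc2 del: power_Suc)
    then show ?case using Cons.IH Cons.prems p2 by auto
  qed simp
  have ins: "{1..p} = insert p {1..<p}" using p2 by auto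
  have "(\<Sum>t\<in>{1..p}. c^t * S t) = (\<Sum>t\<in>{1..<p}. c^t * S t) + c^p * S p"
    unfolding ins by (simp add: add.commute)
  also have "(\<Sum>t\<in>{1..<p}. c^t * S t) = (\<Sum>t\<in>{1..<p}. c^t * S 1)"
    using sym unfolding S_def by (intro sum.cong) auto
  also have "\<dots> = (\<Sum>t\<in>{1..<p}. c^t) * S 1" by (simp add: sum_distrib_right)
  also have "(\<Sum>t\<in>{1..<p}. c^t) = (\<Sum>t\<in>{1..p}. c^t) - c^p"
    unfolding ins by simp
  also have "\<dots> = -1" using geom_root_sum[OF cp c1] cp by simp
  finally have eq: "(\<Sum>t\<in>{1..p}. c^t * S t) = - S 1 + S p" using cp by simp
  have "(\<Sum>t\<in>{1..p}. c^t * S t) = of_nat p * of_nat (length (filter (\<lambda>\<mu>. c*\<mu> = 1) L))"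
    unfolding S_def using powsum_count[OF root cp] p2 by simp
  hence "S 1 = S p - of_nat p * of_nat (length (filter (\<lambda>\<mu>. c*\<mu> = 1) L))"
    using eq by (simp add: algebra_simps)
  hence "S 1 \<in> \<int>" unfolding Sp by simp
  thus ?thesis unfolding S_def by simp
qed


lemma mat_trace_comm:
  fixes X Y :: "complex mat"
  assumes "X \<in> carrier_mat n m" "Y \<in> carrier_mat m n"
  shows "mat_trace (X * Y) = mat_trace (Y * X)"
proof -
  have "mat_trace (X * Y) = (\<Sum>i<n. \<Sum>k<m. X $$ (i,k) * Y $$ (k,i))"
    using assms unfolding mat_trace_def
    by (intro sum.cong) (auto simp: index_mult_mat scalar_prod_def atLeast0LessThan)
  also have "\<dots> = (\<Sum>k<m. \<Sum>i<n. Y $$ (k,i) * X $$ (i,k))"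
    by (subst sum.swap) (simp add: mult.commute)
  also have "\<dots> = mat_trace (Y * X)"
    using assms unfolding mat_trace_def
    by (intro sum.cong) (auto simp: index_mult_mat scalar_prod_def atLeast0LessThan)
  finally show ?thesis .
qed

lemma ut_mult:
  fixes U V :: "complex mat"
  assumes U: "U \<in> carrier_mat n n" and V: "V \<in> carrier_mat n n"
    and uU: "upper_triangular U" and uV: "upper_triangular V"
  shows "upper_triangular (U * V) \<and> (\<forall>i<n. (U * V) $$ (i,i) = U $$ (i,i) * V $$ (i,i))"
proof
  show "upper_triangular (U * V)"
  proof (rule upper_triangularI)
    fix i j assume ij: "j < i" "i < dim_row (U * V)"
    have "(U * V) $$ (i,j) = (\<Sum>k\<in>{0..<n}. U $$ (i,k) * V $$ (k,j))"
      using ij U V by (simp add: index_mult_mat scalar_prod_def)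
    also have "\<dots> = 0"
    proof (rule sum.neutral, intro ballI)
      fix k assume k: "k \<in> {0..<n}"
      show "U $$ (i,k) * V $$ (k,j) = 0"
      proof (cases "k < i")
        case True then show ?thesis using uU ij U by (auto dest: upper_triangularD)
      next
        case False then have "j < k" using ij by auto
        then show ?thesis using uV k V by (auto dest: upper_triangularD)
      qed
    qed
    finally show "(U * V) $$ (i,j) = 0" .
  qed
next
  show "\<forall>i<n. (U * V) $$ (i,i) = U $$ (i,i) * V $$ (i,i)"
  proof (intro allI impI)
    fix i assume i: "i < n"
    have "(U * V) $$ (i,i) = (\<Sum>k\<in>{0..<n}. U $$ (i,k) * V $$ (k,i))"
      using i U V by (simp add: index_mult_mat scalar_prod_def)
    also have "\<dots> = (\<Sum>k\<in>{0..<n}. if k = i then U $$ (i,i) * V $$ (i,i) else 0)"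
    proof (rule sum.cong[OF refl])
      fix k assume k: "k \<in> {0..<n}"
      show "U $$ (i,k) * V $$ (k,i) = (if k = i then U $$ (i,i) * V $$ (i,i) else 0)"
      proof (cases "k < i")
        case True then show ?thesis using uU i U by (auto dest: upper_triangularD)
      next
        case False
        show ?thesis
        proof (cases "k = i")
          case False then have "i < k" using \<open>\<not> k < i\<close> by auto
          then show ?thesis using uV k V by (auto dest: upper_triangularD)
        qed simp
      qed
    qed
    also have "\<dots> = U $$ (i,i) * V $$ (i,i)" using i by simp
    finally show "(U * V) $$ (i,i) = U $$ (i,i) * V $$ (i,i)" .
  qed
qed

lemma ut_pow:
  fixes U :: "complex mat"
  assumes U: "U \<in> carrier_mat n n" and uU: "upper_triangular U"
  shows "upper_triangular (U ^\<^sub>m k) \<and> (\<forall>i<n. (U ^\<^sub>m k) $$ (i,i) = U $$ (i,i) ^ k)"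
proof (induction k)
  case 0
  then show ?case using U by auto
next
  case (Suc k)
  have "U ^\<^sub>m Suc k = U ^\<^sub>m k * U" by simp
  moreover have "U ^\<^sub>m k \<in> carrier_mat n n" using U by simp
  ultimately show ?case using ut_mult[of "U ^\<^sub>m k" n U] Suc U uU by auto
qed

lemma eig_trace:
  fixes B :: "complex mat"
  assumes B: "B \<in> carrier_mat n n"
  shows "\<exists>es. (\<forall>k. mat_trace (B ^\<^sub>m k) = (\<Sum>e\<leftarrow>es. e^k)) \<and>
              (\<forall>q. B ^\<^sub>m q = B \<longrightarrow> (\<forall>e\<in>set es. e^q = e))"
proof -
  obtain es where es: "char_poly B = (\<Prod> a \<leftarrow> es. [:- a, 1:])"
    using char_poly_factorized[OF B] by blast
  obtain U P Q where sd: "schur_decomposition B es = (U,P,Q)" using prod_cases3 by blast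
  have sdr: "similar_mat_wit B U P Q \<and> upper_triangular U \<and> diag_mat U = es"
    by (rule schur_decomposition[OF B es sd])
  have sim: "similar_mat_wit B U P Q" using sdr by (rule conjunct1)
  have uU: "upper_triangular U" using sdr by blast
  have dU: "diag_mat U = es" using sdr by blast
  note W = similar_mat_witD2[OF B sim]
  have car: "U \<in> carrier_mat n n" "P \<in> carrier_mat n n" "Q \<in> carrier_mat n n"
    by (rule W(5), rule W(6), rule W(7))
  have PQ: "P * Q = 1\<^sub>m n" and QP: "Q * P = 1\<^sub>m n" and BU: "B = P * U * Q"
    by (rule W(1), rule W(2), rule W(3))
  have trU: "mat_trace (U ^\<^sub>m k) = (\<Sum>e\<leftarrow>es. e^k)" for k
  proof -
    have "mat_trace (U ^\<^sub>m k) = (\<Sum>i<n. U $$ (i,i) ^ k)"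
      unfolding mat_trace_def using ut_pow[OF car(1) uU, of k] car(1) by simp
    also have "\<dots> = (\<Sum>e\<leftarrow>es. e^k)"
      unfolding dU[symmetric] diag_mat_def using car(1)
      by (simp add: sum_list_sum_nth lessThan_atLeast0)
    finally show ?thesis .
  qed
  have trB: "mat_trace (B ^\<^sub>m k) = mat_trace (U ^\<^sub>m k)" for k
  proof -
    have "B ^\<^sub>m k = P * U ^\<^sub>m k * Q" using similar_mat_wit_pow_id[OF sim] .
    hence "mat_trace (B ^\<^sub>m k) = mat_trace ((P * U ^\<^sub>m k) * Q)" by simp
    also have "\<dots> = mat_trace (Q * (P * U ^\<^sub>m k))"
      by (rule mat_trace_comm[of _ n n]) (use car in auto)
    also have "Q * (P * U ^\<^sub>m k) = U ^\<^sub>m k"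
      using car QP by (simp add: assoc_mult_mat[symmetric, of Q n n P n "U ^\<^sub>m k" n])
    finally show ?thesis .
  qed
  have fix_pt: "\<forall>e\<in>set es. e^q = e" if Bq: "B ^\<^sub>m q = B" for q
  proof -
    have "P * U ^\<^sub>m q * Q = P * U * Q" using Bq BU similar_mat_wit_pow_id[OF sim, of q] by simp
    hence "Q * (P * U ^\<^sub>m q * Q) * P = Q * (P * U * Q) * P" by simp
    moreover have "Q * (P * X * Q) * P = X" if "X \<in> carrier_mat n n" for X
    proof -
      have "Q * (P * X * Q) * P = (Q * P) * X * (Q * P)"
        using car that by (simp add: assoc_mult_mat[of _ n n _ n _ n])
      thus ?thesis using QP that by simp
    qed
    ultimately have Uq: "U ^\<^sub>m q = U" using car by simp
    show ?thesis
    proof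
      fix e assume "e \<in> set es"
      then obtain i where i: "i < n" "e = U $$ (i,i)"
        using dU car(1) unfolding diag_mat_def by auto
      show "e^q = e" using ut_pow[OF car(1) uU, of q] i Uq by auto
    qed
  qed
  show ?thesis using trB trU fix_pt by auto
qed


fun prodfam :: "complex list list \<Rightarrow> complex list" where
  "prodfam [] = [1]"
| "prodfam (l # ls) = concat (map (\<lambda>x. map (\<lambda>y. x * y) (prodfam ls)) l)"

lemma sum_list_concat_map: "sum_list (map f (concat xs)) = (\<Sum>x\<leftarrow>xs. sum_list (map f x))"
  by (induction xs) auto

lemma prodfam_powsum:
  "(\<Sum>\<mu>\<leftarrow>prodfam ls. \<mu>^t) = (\<Prod>l\<leftarrow>ls. (\<Sum>\<mu>\<leftarrow>l. \<mu>^t))"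
proof (induction ls)
  case Nil
  then show ?case by simp
next
  case (Cons l ls)
  have "(\<Sum>\<mu>\<leftarrow>prodfam (l # ls). \<mu>^t) = (\<Sum>x\<leftarrow>l. \<Sum>y\<leftarrow>prodfam ls. (x*y)^t)"
    by (simp add: sum_list_concat_map o_def)
  also have "\<dots> = (\<Sum>x\<leftarrow>l. x^t * (\<Sum>y\<leftarrow>prodfam ls. y^t))"
    by (simp add: power_mult_distrib sum_list_const_mult)
  also have "\<dots> = (\<Sum>x\<leftarrow>l. x^t) * (\<Sum>y\<leftarrow>prodfam ls. y^t)"
    by (simp add: sum_list_mult_const)
  finally show ?case using Cons by simp
qed

lemma prodfam_root:
  assumes "\<forall>l\<in>set ls. \<forall>\<mu>\<in>set l. \<mu>^q = \<mu>"
  shows "\<forall>\<mu>\<in>set (prodfam ls). \<mu>^q = \<mu>"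
  using assms
proof (induction ls)
  case Nil
  then show ?case by simp
next
  case (Cons l ls)
  then show ?case by (auto simp: power_mult_distrib)
qed

lemma prime_decomp_nat:
  fixes n p :: nat
  assumes "prime p" "n > 0"
  shows "\<exists>a r. n = p^a * r \<and> \<not> p dvd r"
  using assms(2)
proof (induction n rule: less_induct)
  case (less n)
  show ?case
  proof (cases "p dvd n")
    case True
    then obtain m where m: "n = p * m" by blast
    have "m < n" "m > 0" using m less.prems prime_gt_1_nat[OF assms(1)] by auto
    then obtain a r where "m = p^a * r" "\<not> p dvd r" using less.IH by blast
    then show ?thesis using m by (intro exI[of _ "Suc a"] exI[of _ r]) auto
  next
    case False
    then show ?thesis by (intro exI[of _ 0] exI[of _ n]) auto
  qed
qed

lemma exists_coprime_rep:
  fixes n p j :: nat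
  assumes p: "prime p" and n: "n > 0" and j: "\<not> p dvd j"
  shows "\<exists>k. [k = j] (mod p) \<and> coprime k n"
proof -
  obtain a r where nr: "n = p^a * r" and r: "\<not> p dvd r" using prime_decomp_nat[OF p n] by blast
  have "coprime p r" using p r by (simp add: prime_imp_coprime)
  then obtain k where k: "[k = j] (mod p)" "[k = 1] (mod r)"
    using binary_chinese_remainder_nat by blast
  have "coprime j p" using prime_imp_coprime[OF p j] by (simp add: ac_simps)
  hence "coprime k p" using k(1) by (metis cong_imp_coprime cong_sym)
  moreover have "coprime k r" using k(2) by (metis cong_imp_coprime cong_sym coprime_1_left)
  ultimately have "coprime k n" unfolding nr by simp
  thus ?thesis using k by blast
qed


lemma sum_endo:
  assumes "finite S" "inj_on \<phi> S" "\<phi> ` S \<subseteq> S"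
  shows "(\<Sum>x\<in>S. f (\<phi> x)) = (\<Sum>x\<in>S. f x)"
proof -
  have "\<phi> ` S = S" using endo_inj_surj[OF assms(1,3,2)] .
  hence "(\<Sum>x\<in>S. f x) = (\<Sum>x\<in>\<phi> ` S. f x)" by simp
  also have "\<dots> = (\<Sum>x\<in>S. f (\<phi> x))" using sum.reindex[OF assms(2)] by simp
  finally show ?thesis by simp
qed

lemma (in group) subgroup_pow_closed:
  assumes "subgroup S G" "x \<in> S"
  shows "x [^] (k::nat) \<in> S"
proof (induction k)
  case 0
  then show ?case using subgroup.one_closed[OF assms(1)] by simp
next
  case (Suc k)
  have "x \<in> carrier G" using assms subgroup.subset by blast
  then show ?case using Suc subgroup.m_closed[OF assms(1)] assms(2) by simp
qed

locale scx = group G for G :: "('a, 'b) monoid_scheme" (structure) +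
  fixes d :: nat and \<rho> :: "'a \<Rightarrow> complex mat" and \<psi> :: "'a \<Rightarrow> complex"
  assumes finG: "finite (carrier G)"
    and rep: "is_rep G d \<rho>"
    and psi: "\<And>g. g \<in> carrier G \<Longrightarrow> \<psi> g = mat_trace (\<rho> g)"
    and psi_real: "\<And>g. g \<in> carrier G \<Longrightarrow> \<psi> g = complex_of_real (Re (\<psi> g))"
    and psi_nonneg: "\<And>g. g \<in> carrier G \<Longrightarrow> 0 \<le> Re (\<psi> g)"
    and nz: "\<And>g q k. g \<in> carrier G \<Longrightarrow> prime (q::nat) \<Longrightarrow> k \<ge> 1 \<Longrightarrow> ord g = q^k \<Longrightarrow> \<psi> g \<noteq> 0"
begin

lemma rho_car: "g \<in> carrier G \<Longrightarrow> \<rho> g \<in> carrier_mat d d"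
  using rep unfolding is_rep_def by blast

lemma rho_mult: "g \<in> carrier G \<Longrightarrow> h \<in> carrier G \<Longrightarrow> \<rho> (g \<otimes> h) = \<rho> g * \<rho> h"
  using rep unfolding is_rep_def by blast

lemma rho_one: "\<rho> \<one> = 1\<^sub>m d"
  using rep unfolding is_rep_def by blast

lemma psi_mult: "g \<in> carrier G \<Longrightarrow> h \<in> carrier G \<Longrightarrow> \<psi> (g \<otimes> h) = mat_trace (\<rho> g * \<rho> h)"
  using psi rho_mult by simp

end

locale stepx = scx +
  fixes H N :: "'a set" and p :: nat
  assumes subH: "subgroup H G" and subN: "subgroup N G" and NH: "N \<subseteq> H"
    and norm: "\<And>h n. h \<in> H \<Longrightarrow> n \<in> N \<Longrightarrow> h \<otimes> n \<otimes> inv h \<in> N"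
    and p: "prime p" and powp: "\<And>m. m \<in> H \<Longrightarrow> m [^] p \<in> N"
begin

lemma HG: "H \<subseteq> carrier G" using subH subgroup.subset by blast
lemma NG: "N \<subseteq> carrier G" using subN subgroup.subset by blast
lemma finH: "finite H" using HG finG finite_subset by blast
lemma finN: "finite N" using NG finG finite_subset by blast
lemma cardN: "card N > 0" using finN subgroup.one_closed[OF subN] card_gt_0_iff by blast

definition Av :: "complex mat" where
  "Av = mat d d (\<lambda>(i,j). (\<Sum>n\<in>N. \<rho> n $$ (i,j)) / of_nat (card N))"

lemma Av_car: "Av \<in> carrier_mat d d" unfolding Av_def by simp
lemma dimAv: "dim_row Av = d" "dim_col Av = d" unfolding Av_def by auto

lemma Lmul:
  assumes X: "X \<in> carrier_mat d d"
  shows "X * Av = mat d d (\<lambda>(i,j). (\<Sum>n\<in>N. (X * \<rho> n) $$ (i,j)) / of_nat (card N))"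
proof (rule eq_matI)
  fix i j assume i: "i < dim_row (mat d d (\<lambda>(i,j). (\<Sum>n\<in>N. (X * \<rho> n) $$ (i,j)) / of_nat (card N)))"
    and j: "j < dim_col (mat d d (\<lambda>(i,j). (\<Sum>n\<in>N. (X * \<rho> n) $$ (i,j)) / of_nat (card N)))"
  have i': "i < d" and j': "j < d" using i j by auto
  have "(X * Av) $$ (i,j) = (\<Sum>k\<in>{0..<d}. X $$ (i,k) * ((\<Sum>n\<in>N. \<rho> n $$ (k,j)) / of_nat (card N)))"
    using i' j' X by (simp add: index_mult_mat scalar_prod_def Av_def)
  also have "\<dots> = (\<Sum>k\<in>{0..<d}. \<Sum>n\<in>N. X $$ (i,k) * \<rho> n $$ (k,j)) / of_nat (card N)"
    by (simp add: sum_distrib_left sum_divide_distrib)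
  also have "(\<Sum>k\<in>{0..<d}. \<Sum>n\<in>N. X $$ (i,k) * \<rho> n $$ (k,j)) = (\<Sum>n\<in>N. \<Sum>k\<in>{0..<d}. X $$ (i,k) * \<rho> n $$ (k,j))"
    by (rule sum.swap)
  also have "\<dots> = (\<Sum>n\<in>N. (X * \<rho> n) $$ (i,j))"
  proof (rule sum.cong[OF refl])
    fix n assume "n \<in> N"
    hence "\<rho> n \<in> carrier_mat d d" using rho_car NG by blast
    thus "(\<Sum>k\<in>{0..<d}. X $$ (i,k) * \<rho> n $$ (k,j)) = (X * \<rho> n) $$ (i,j)"
      using i' j' X by (simp add: index_mult_mat scalar_prod_def)
  qed
  finally show "(X * Av) $$ (i,j) = mat d d (\<lambda>(i,j). (\<Sum>n\<in>N. (X * \<rho> n) $$ (i,j)) / of_nat (card N)) $$ (i,j)"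
    using i' j' by simp
qed (use X Av_car in auto)

lemma Rmul:
  assumes X: "X \<in> carrier_mat d d"
  shows "Av * X = mat d d (\<lambda>(i,j). (\<Sum>n\<in>N. (\<rho> n * X) $$ (i,j)) / of_nat (card N))"
proof (rule eq_matI)
  fix i j assume i: "i < dim_row (mat d d (\<lambda>(i,j). (\<Sum>n\<in>N. (\<rho> n * X) $$ (i,j)) / of_nat (card N)))"
    and j: "j < dim_col (mat d d (\<lambda>(i,j). (\<Sum>n\<in>N. (\<rho> n * X) $$ (i,j)) / of_nat (card N)))"
  have i': "i < d" and j': "j < d" using i j by auto
  have "(Av * X) $$ (i,j) = (\<Sum>k\<in>{0..<d}. ((\<Sum>n\<in>N. \<rho> n $$ (i,k)) / of_nat (card N)) * X $$ (k,j))"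
    using i' j' X by (simp add: index_mult_mat scalar_prod_def Av_def)
  also have "\<dots> = (\<Sum>k\<in>{0..<d}. \<Sum>n\<in>N. \<rho> n $$ (i,k) * X $$ (k,j)) / of_nat (card N)"
    by (simp add: sum_distrib_right sum_divide_distrib)
  also have "(\<Sum>k\<in>{0..<d}. \<Sum>n\<in>N. \<rho> n $$ (i,k) * X $$ (k,j)) = (\<Sum>n\<in>N. \<Sum>k\<in>{0..<d}. \<rho> n $$ (i,k) * X $$ (k,j))"
    by (rule sum.swap)
  also have "\<dots> = (\<Sum>n\<in>N. (\<rho> n * X) $$ (i,j))"
  proof (rule sum.cong[OF refl])
    fix n assume "n \<in> N"
    hence "\<rho> n \<in> carrier_mat d d" using rho_car NG by blast
    thus "(\<Sum>k\<in>{0..<d}. \<rho> n $$ (i,k) * X $$ (k,j)) = (\<rho> n * X) $$ (i,j)"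
      using i' j' X by (simp add: index_mult_mat scalar_prod_def)
  qed
  finally show "(Av * X) $$ (i,j) = mat d d (\<lambda>(i,j). (\<Sum>n\<in>N. (\<rho> n * X) $$ (i,j)) / of_nat (card N)) $$ (i,j)"
    using i' j' by simp
qed (use X Av_car in auto)

lemma sum_left_N:
  assumes "n0 \<in> N"
  shows "(\<Sum>n\<in>N. F (n0 \<otimes> n)) = (\<Sum>n\<in>N. F n)"
proof (rule sum_endo[OF finN])
  have "n0 \<in> carrier G" using assms NG by blast
  thus "inj_on ((\<otimes>) n0) N" using NG by (auto simp: inj_on_def subset_iff)
  show "(\<otimes>) n0 ` N \<subseteq> N" using assms subgroup.m_closed[OF subN] by auto
qed

lemma sum_conj_N:
  assumes "h \<in> H"
  shows "(\<Sum>n\<in>N. F (h \<otimes> n \<otimes> inv h)) = (\<Sum>n\<in>N. F n)"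
proof (rule sum_endo[OF finN])
  have hG: "h \<in> carrier G" using assms HG by blast
  show "inj_on (\<lambda>n. h \<otimes> n \<otimes> inv h) N"
  proof (rule inj_onI)
    fix x y assume xy: "x \<in> N" "y \<in> N" "h \<otimes> x \<otimes> inv h = h \<otimes> y \<otimes> inv h"
    have "x \<in> carrier G" "y \<in> carrier G" using xy NG by auto
    thus "x = y" using xy hG by (metis inv_closed m_closed right_cancel Units_l_cancel Units_eq)
  qed
  show "(\<lambda>n. h \<otimes> n \<otimes> inv h) ` N \<subseteq> N" using norm assms by auto
qed

lemma fix_left: "n0 \<in> N \<Longrightarrow> \<rho> n0 * Av = Av"
proof -
  assume n0: "n0 \<in> N"
  have "(\<Sum>n\<in>N. (\<rho> n0 * \<rho> n) $$ (i,j)) = (\<Sum>n\<in>N. \<rho> n $$ (i,j))" for i j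
  proof -
    have "(\<Sum>n\<in>N. (\<rho> n0 * \<rho> n) $$ (i,j)) = (\<Sum>n\<in>N. \<rho> (n0 \<otimes> n) $$ (i,j))"
      using n0 NG by (intro sum.cong refl) (simp add: rho_mult subset_iff)
    also have "\<dots> = (\<Sum>n\<in>N. \<rho> n $$ (i,j))" using sum_left_N[OF n0, of "\<lambda>x. \<rho> x $$ (i,j)"] .
    finally show ?thesis .
  qed
  thus ?thesis using Lmul[OF rho_car[of n0]] n0 NG unfolding Av_def by auto
qed

lemma Av_idem: "Av * Av = Av"
proof -
  have "Av * Av = mat d d (\<lambda>(i,j). (\<Sum>n\<in>N. (\<rho> n * Av) $$ (i,j)) / of_nat (card N))"
    using Rmul[OF Av_car] .
  also have "\<dots> = mat d d (\<lambda>(i,j). (\<Sum>n\<in>N. Av $$ (i,j)) / of_nat (card N))"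
    using fix_left by simp
  also have "\<dots> = Av"
    using cardN by (intro eq_matI) (auto simp: dimAv)
  finally show ?thesis .
qed

lemma Av_comm: "h \<in> H \<Longrightarrow> \<rho> h * Av = Av * \<rho> h"
proof -
  assume h: "h \<in> H"
  have hG: "h \<in> carrier G" using h HG by blast
  have "(\<Sum>n\<in>N. (\<rho> h * \<rho> n) $$ (i,j)) = (\<Sum>n\<in>N. (\<rho> n * \<rho> h) $$ (i,j))" for i j
  proof -
    have "(\<Sum>n\<in>N. (\<rho> h * \<rho> n) $$ (i,j)) = (\<Sum>n\<in>N. \<rho> (h \<otimes> n) $$ (i,j))"
      using hG NG by (intro sum.cong refl) (simp add: rho_mult subset_iff)
    also have "\<dots> = (\<Sum>n\<in>N. \<rho> ((h \<otimes> n \<otimes> inv h) \<otimes> h) $$ (i,j))"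
      using hG NG by (intro sum.cong) (auto simp: m_assoc)
    also have "\<dots> = (\<Sum>n\<in>N. \<rho> (n \<otimes> h) $$ (i,j))"
      using sum_conj_N[OF h, of "\<lambda>x. \<rho> (x \<otimes> h) $$ (i,j)"] .
    also have "\<dots> = (\<Sum>n\<in>N. (\<rho> n * \<rho> h) $$ (i,j))"
      using hG NG by (intro sum.cong refl) (simp add: rho_mult subset_iff)
    finally show ?thesis .
  qed
  thus ?thesis using Lmul[OF rho_car[OF hG]] Rmul[OF rho_car[OF hG]] by simp
qed

end

context stepx
begin

definition fr :: "'a \<Rightarrow> real" where
  "fr x = (\<Sum>n\<in>N. Re (\<psi> (x \<otimes> n))) / real (card N)"

lemma f_eq:
  assumes x: "x \<in> carrier G"
  shows "mat_trace (\<rho> x * Av) = complex_of_real (fr x)"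
proof -
  have "mat_trace (\<rho> x * Av) = (\<Sum>i<d. (\<Sum>n\<in>N. (\<rho> x * \<rho> n) $$ (i,i)) / of_nat (card N))"
    unfolding Lmul[OF rho_car[OF x]] mat_trace_def by simp
  also have "\<dots> = (\<Sum>n\<in>N. \<Sum>i<d. (\<rho> x * \<rho> n) $$ (i,i)) / of_nat (card N)"
    by (simp add: sum_divide_distrib[symmetric] sum.swap[of _ "{..<d}"])
  also have "\<dots> = (\<Sum>n\<in>N. \<psi> (x \<otimes> n)) / of_nat (card N)"
  proof -
    have "(\<Sum>i<d. (\<rho> x * \<rho> n) $$ (i,i)) = \<psi> (x \<otimes> n)" if n: "n \<in> N" for n
    proof -
      have nG: "n \<in> carrier G" using n NG by blast
      have "\<psi> (x \<otimes> n) = mat_trace (\<rho> x * \<rho> n)" using psi_mult[OF x nG] .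
      also have "\<dots> = (\<Sum>i<d. (\<rho> x * \<rho> n) $$ (i,i))"
        unfolding mat_trace_def using rho_car[OF x] by simp
      finally show ?thesis by simp
    qed
    thus ?thesis by simp
  qed
  also have "\<dots> = complex_of_real (fr x)"
  proof -
    have "(\<Sum>n\<in>N. \<psi> (x \<otimes> n)) = (\<Sum>n\<in>N. complex_of_real (Re (\<psi> (x \<otimes> n))))"
      using x NG psi_real by (intro sum.cong refl) (simp add: subset_iff)
    thus ?thesis unfolding fr_def by simp
  qed
  finally show ?thesis .
qed

lemma fr_right:
  assumes x: "x \<in> carrier G" and n0: "n0 \<in> N"
  shows "fr (x \<otimes> n0) = fr x"
proof -
  have n0G: "n0 \<in> carrier G" using n0 NG by blast
  have "(\<Sum>n\<in>N. Re (\<psi> (x \<otimes> n0 \<otimes> n))) = (\<Sum>n\<in>N. Re (\<psi> (x \<otimes> (n0 \<otimes> n))))"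
    using x n0G NG by (intro sum.cong refl) (simp add: m_assoc subset_iff)
  also have "\<dots> = (\<Sum>n\<in>N. Re (\<psi> (x \<otimes> n)))"
    using sum_left_N[OF n0, of "\<lambda>y. Re (\<psi> (x \<otimes> y))"] .
  finally show ?thesis unfolding fr_def by simp
qed

lemma fr_nonneg: "x \<in> carrier G \<Longrightarrow> fr x \<ge> 0"
  unfolding fr_def using NG psi_nonneg by (auto intro!: sum_nonneg divide_nonneg_nonneg simp: subset_iff)

lemma pow_mod_N:
  assumes m: "m \<in> H"
  shows "\<exists>n'\<in>N. m [^] k = m [^] (k mod p) \<otimes> n'"
proof -
  have mG: "m \<in> carrier G" using m HG by blast
  have "m [^] (k mod p) \<otimes> (m [^] p) [^] (k div p) = m [^] (k mod p) \<otimes> m [^] (p * (k div p))"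
    using mG by (simp add: nat_pow_pow)
  also have "\<dots> = m [^] (k mod p + p * (k div p))" using mG by (simp add: nat_pow_mult)
  also have "\<dots> = m [^] k" by simp
  finally show ?thesis using subgroup_pow_closed[OF subN powp[OF m]] by (metis (no_types))
qed

lemma fr_pow_mod:
  assumes m: "m \<in> H"
  shows "fr (m [^] k) = fr (m [^] (k mod p))"
proof -
  have mG: "m \<in> carrier G" using m HG by blast
  obtain n' where "n' \<in> N" "m [^] k = m [^] (k mod p) \<otimes> n'" using pow_mod_N[OF m] by blast
  thus ?thesis using fr_right[of "m [^] (k mod p)" n'] mG by simp
qed

lemma in_N_from_prod:
  assumes x: "x \<in> carrier G" and n: "n \<in> N" and xn: "x \<otimes> n \<in> N"
  shows "x \<in> N"
proof -
  have nG: "n \<in> carrier G" using n NG by blast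
  have "x = (x \<otimes> n) \<otimes> inv n" using x nG by (simp add: m_assoc)
  thus ?thesis using subgroup.m_closed[OF subN xn subgroup.m_inv_closed[OF subN n]] by simp
qed

lemma pow_notin:
  assumes m: "m \<in> H" "m \<notin> N" and j: "\<not> p dvd j"
  shows "m [^] j \<in> H - N"
proof
  have mG: "m \<in> carrier G" using m HG by blast
  show "m [^] j \<in> H" using subgroup_pow_closed[OF subH m(1)] .
  show "m [^] j \<notin> N"
  proof
    assume mj: "m [^] j \<in> N"
    have "coprime j p" using prime_imp_coprime[OF p j] by (simp add: ac_simps)
    then obtain u where u: "[j * u = Suc 0] (mod p)" using cong_solve_coprime_nat by blast
    have "(j * u) mod p = 1" using u p prime_gt_1_nat unfolding cong_def by auto
    obtain n' where n': "n' \<in> N" "m [^] (j*u) = m [^] ((j*u) mod p) \<otimes> n'" using pow_mod_N[OF m(1)] by blast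
    have "m [^] (j*u) = (m [^] j) [^] u" using mG by (simp add: nat_pow_pow)
    hence "m [^] (j*u) \<in> N" using subgroup_pow_closed[OF subN mj] by simp
    hence "m \<otimes> n' \<in> N" using n' \<open>(j * u) mod p = 1\<close> mG by simp
    thus False using in_N_from_prod[OF mG n'(1)] m(2) by blast
  qed
qed

lemma ppe:
  assumes x: "x \<in> H" "x \<notin> N"
  shows "\<exists>n\<in>N. \<exists>q k. prime q \<and> k \<ge> 1 \<and> ord (x \<otimes> n) = q^k"
proof -
  have xG: "x \<in> carrier G" using x HG by blast
  have o: "ord x > 0" using ord_ge_1[OF finG xG] by simp
  obtain a r where ar: "ord x = p^a * r" and r: "\<not> p dvd r" using prime_decomp_nat[OF p o] by blast
  have "coprime r p" using prime_imp_coprime[OF p r] by (simp add: ac_simps)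
  then obtain u where u: "[r * u = Suc 0] (mod p)" using cong_solve_coprime_nat by blast
  have ru: "(r * u) mod p = 1" using u p prime_gt_1_nat unfolding cong_def by auto
  obtain n' where n': "n' \<in> N" "x [^] (r*u) = x [^] ((r*u) mod p) \<otimes> n'" using pow_mod_N[OF x(1)] by blast
  have n'G: "n' \<in> carrier G" using n' NG by blast
  define y where "y = x \<otimes> n'"
  have yG: "y \<in> carrier G" unfolding y_def using xG n'G by simp
  have y: "y = x [^] (r*u)" using n' ru xG unfolding y_def by simp
  have "y [^] (p^a) = x [^] (ord x * u)" using xG y by (simp add: nat_pow_pow ar ac_simps)
  also have "\<dots> = \<one>" using xG by (simp add: nat_pow_pow[symmetric])
  finally have "ord y dvd p^a" using pow_eq_id[OF yG] by simp
  then obtain b where b: "b \<le> a" "ord y = p^b" using divides_primepow_nat[OF p] by blast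
  have "b \<noteq> 0"
  proof
    assume "b = 0"
    hence "y = \<one>" using b ord_eq_1[OF yG] by simp
    hence "x \<otimes> n' \<in> N" unfolding y_def using subgroup.one_closed[OF subN] by simp
    thus False using in_N_from_prod[OF xG n'(1)] x(2) by blast
  qed
  thus ?thesis using n'(1) b p unfolding y_def by (intro bexI[of _ n'] exI[of _ p] exI[of _ b]) auto
qed

lemma fr_pos:
  assumes x: "x \<in> H" "x \<notin> N"
  shows "fr x > 0"
proof (rule ccontr)
  assume "\<not> fr x > 0"
  have xG: "x \<in> carrier G" using x HG by blast
  hence "fr x = 0" using fr_nonneg \<open>\<not> fr x > 0\<close> by force
  hence s0: "(\<Sum>n\<in>N. Re (\<psi> (x \<otimes> n))) = 0" unfolding fr_def using cardN by simp
  have "\<forall>n\<in>N. Re (\<psi> (x \<otimes> n)) = 0"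
    using sum_nonneg_eq_0_iff[OF finN, of "\<lambda>n. Re (\<psi> (x \<otimes> n))"] s0 psi_nonneg xG NG
    by (auto simp: subset_iff)
  hence z: "\<forall>n\<in>N. \<psi> (x \<otimes> n) = 0" using psi_real xG NG by (metis m_closed of_real_0 subsetD)
  obtain n q k where "n \<in> N" "prime q" "k \<ge> 1" "ord (x \<otimes> n) = q^k" using ppe[OF x] by blast
  moreover have "x \<otimes> n \<in> carrier G" using xG \<open>n \<in> N\<close> NG by auto
  ultimately show False using nz z by blast
qed

end

lemma prod_endo:
  assumes "finite S" "inj_on \<phi> S" "\<phi> ` S \<subseteq> S"
  shows "(\<Prod>x\<in>S. f (\<phi> x)) = (\<Prod>x\<in>S. f x)"
proof -
  have "\<phi> ` S = S" using endo_inj_surj[OF assms(1,3,2)] .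
  hence "(\<Prod>x\<in>S. f x) = (\<Prod>x\<in>\<phi> ` S. f x)" by simp
  also have "\<dots> = (\<Prod>x\<in>S. f (\<phi> x))" using prod.reindex[OF assms(2)] by simp
  finally show ?thesis by simp
qed

lemma mod_mult_perm:
  fixes p t :: nat
  assumes p: "prime p" and t: "t \<in> {1..<p}"
  shows "inj_on (\<lambda>j. (j * t) mod p) {1..<p}" "(\<lambda>j. (j * t) mod p) ` {1..<p} \<subseteq> {1..<p}"
proof -
  have tp: "\<not> p dvd t" using t by (auto dest: dvd_imp_le)
  have ct: "coprime t p" using prime_imp_coprime[OF p tp] by (simp add: ac_simps)
  show "inj_on (\<lambda>j. (j * t) mod p) {1..<p}"
  proof (rule inj_onI)
    fix x y assume xy: "x \<in> {1..<p}" "y \<in> {1..<p}" "(x * t) mod p = (y * t) mod p"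
    hence "[x * t = y * t] (mod p)" by (simp add: cong_def)
    hence "[x = y] (mod p)" using cong_mult_rcancel_nat[OF ct] by blast
    thus "x = y" using xy cong_less_modulus_unique_nat by auto
  qed
  show "(\<lambda>j. (j * t) mod p) ` {1..<p} \<subseteq> {1..<p}"
  proof
    fix z assume "z \<in> (\<lambda>j. (j * t) mod p) ` {1..<p}"
    then obtain j where j: "j \<in> {1..<p}" "z = (j * t) mod p" by blast
    have jp: "\<not> p dvd j" using j by (auto dest: dvd_imp_le)
    have "\<not> p dvd j * t" using jp tp p by (simp add: prime_dvd_mult_iff)
    hence "z \<noteq> 0" using j by (simp add: dvd_eq_mod_eq_0)
    moreover have "z < p" using j p prime_gt_0_nat by simp
    ultimately show "z \<in> {1..<p}" by simp
  qed
qed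

context stepx
begin

lemma Bpow:
  assumes m: "m \<in> H"
  shows "(\<rho> m * Av) ^\<^sub>m (Suc k) = \<rho> (m [^] (Suc k)) * Av"
proof (induction k)
  case 0
  have mG: "m \<in> carrier G" using m HG by blast
  have "(\<rho> m * Av) ^\<^sub>m (Suc 0) = 1\<^sub>m d * (\<rho> m * Av)"
    using rho_car[OF mG] Av_car by simp
  also have "\<dots> = \<rho> m * Av" using rho_car[OF mG] Av_car by simp
  finally show ?case using mG by simp
next
  case (Suc k)
  have mG: "m \<in> carrier G" using m HG by blast
  define T where "T = \<rho> (m [^] Suc k)"
  define R where "R = \<rho> m"
  have T: "T \<in> carrier_mat d d" unfolding T_def using rho_car mG by simp
  have R: "R \<in> carrier_mat d d" unfolding R_def using rho_car mG by simp
  have A: "Av \<in> carrier_mat d d" by (rule Av_car)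
  have "(\<rho> m * Av) ^\<^sub>m (Suc (Suc k)) = (T * Av) * (R * Av)"
    using Suc unfolding T_def R_def by simp
  also have "\<dots> = T * (Av * (R * Av))" by (rule assoc_mult_mat[OF T A mult_carrier_mat[OF R A]])
  also have "Av * (R * Av) = (Av * R) * Av" by (rule assoc_mult_mat[OF A R A, symmetric])
  also have "Av * R = R * Av" unfolding R_def using Av_comm[OF m] by simp
  also have "(R * Av) * Av = R * (Av * Av)" by (rule assoc_mult_mat[OF R A A])
  also have "Av * Av = Av" by (rule Av_idem)
  also have "T * (R * Av) = (T * R) * Av" by (rule assoc_mult_mat[OF T R A, symmetric])
  also have "T * R = \<rho> (m [^] Suc (Suc k))"
    unfolding T_def R_def using mG by (simp add: rho_mult[symmetric] del: nat_pow_Suc)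
  finally show ?case .
qed

lemma Bfix:
  assumes m: "m \<in> H"
  shows "(\<rho> m * Av) ^\<^sub>m (p + 1) = \<rho> m * Av"
proof -
  have mG: "m \<in> carrier G" using m HG by blast
  have mp: "m [^] p \<in> N" using powp[OF m] .
  have mpG: "m [^] p \<in> carrier G" using mG by simp
  have "(\<rho> m * Av) ^\<^sub>m (p + 1) = \<rho> (m [^] (Suc p)) * Av" using Bpow[OF m, of p] by simp
  also have "m [^] (Suc p) = m \<otimes> m [^] p" using mG by (rule nat_pow_Suc2)
  also have "\<rho> (m \<otimes> m [^] p) * Av = (\<rho> m * \<rho> (m [^] p)) * Av" using rho_mult[OF mG mpG] by simp
  also have "\<dots> = \<rho> m * (\<rho> (m [^] p) * Av)"
    by (rule assoc_mult_mat[OF rho_car[OF mG] rho_car[OF mpG] Av_car])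
  also have "\<rho> (m [^] p) * Av = Av" using fix_left[OF mp] .
  finally show ?thesis .
qed

lemma elem_ineq:
  assumes m: "m \<in> H" "m \<notin> N"
  shows "(\<Sum>j\<in>{1..<p}. fr (m [^] j)) \<ge> real (p - 1)"
proof -
  have mG: "m \<in> carrier G" using m HG by blast
  have p2: "p \<ge> 2" using p prime_ge_2_nat by blast
  define X where "X = \<rho> m * Av"
  have X: "X \<in> carrier_mat d d" unfolding X_def using rho_car[OF mG] Av_car by simp
  obtain es where trX: "\<forall>k. mat_trace (X ^\<^sub>m k) = (\<Sum>e\<leftarrow>es. e^k)"
    and fixp: "\<forall>q. X ^\<^sub>m q = X \<longrightarrow> (\<forall>e\<in>set es. e^q = e)"
    using eig_trace[OF X] by blast
  have root: "\<forall>e\<in>set es. e^(p+1) = e" using fixp Bfix[OF m(1)] unfolding X_def by blast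
  have y: "(\<Sum>e\<leftarrow>es. e^k) = complex_of_real (fr (m [^] k))" if k: "k \<ge> 1" for k
  proof -
    obtain k' where k': "k = Suc k'" using k by (cases k) auto
    have "(\<Sum>e\<leftarrow>es. e^k) = mat_trace (X ^\<^sub>m k)" using trX by simp
    also have "X ^\<^sub>m k = \<rho> (m [^] k) * Av" unfolding X_def k' by (rule Bpow[OF m(1)])
    also have "mat_trace (\<rho> (m [^] k) * Av) = complex_of_real (fr (m [^] k))"
      by (rule f_eq) (use mG in simp)
    finally show ?thesis .
  qed
  define P where "P = (\<Prod>j\<in>{1..<p}. fr (m [^] j))"
  have frpos: "fr (m [^] j) > 0" if "j \<in> {1..<p}" for j
  proof -
    have "\<not> p dvd j" using that by (auto dest: dvd_imp_le)
    thus ?thesis using pow_notin[OF m] fr_pos by blast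
  qed
  define Ls where "Ls = map (\<lambda>j. map (\<lambda>e. e^j) es) [1..<p]"
  define L where "L = prodfam Ls"
  have LsumT: "(\<Sum>\<mu>\<leftarrow>L. \<mu>^t) = complex_of_real P" if t: "t \<in> {1..<p}" for t
  proof -
    have "(\<Sum>\<mu>\<leftarrow>L. \<mu>^t) = (\<Prod>l\<leftarrow>Ls. (\<Sum>\<mu>\<leftarrow>l. \<mu>^t))"
      unfolding L_def by (rule prodfam_powsum)
    also have "\<dots> = (\<Prod>j\<leftarrow>[1..<p]. (\<Sum>e\<leftarrow>es. e^(j*t)))"
      unfolding Ls_def by (simp add: o_def power_mult)
    also have "\<dots> = (\<Prod>j\<in>{1..<p}. (\<Sum>e\<leftarrow>es. e^(j*t)))"
      by (subst prod.distinct_set_conv_list[symmetric]) auto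
    also have "\<dots> = (\<Prod>j\<in>{1..<p}. complex_of_real (fr (m [^] ((j*t) mod p))))"
    proof (rule prod.cong[OF refl])
      fix j assume j: "j \<in> {1..<p}"
      have "j * t \<ge> 1" using j t by simp
      hence "(\<Sum>e\<leftarrow>es. e^(j*t)) = complex_of_real (fr (m [^] (j*t)))" using y by blast
      also have "fr (m [^] (j*t)) = fr (m [^] ((j*t) mod p))" using fr_pow_mod[OF m(1)] .
      finally show "(\<Sum>e\<leftarrow>es. e^(j*t)) = complex_of_real (fr (m [^] ((j*t) mod p)))" .
    qed
    also have "\<dots> = (\<Prod>j\<in>{1..<p}. complex_of_real (fr (m [^] j)))"
      using prod_endo[OF _ mod_mult_perm[OF p t], of "\<lambda>j. complex_of_real (fr (m [^] j))"] by simp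
    also have "\<dots> = complex_of_real P" unfolding P_def by simp
    finally show ?thesis .
  qed
  have Lroot: "\<forall>\<mu>\<in>set L. \<mu>^(p+1) = \<mu>"
    unfolding L_def
  proof (rule prodfam_root)
    show "\<forall>l\<in>set Ls. \<forall>\<mu>\<in>set l. \<mu> ^ (p + 1) = \<mu>"
    proof (intro ballI)
      fix l \<mu> assume l: "l \<in> set Ls" and mu: "\<mu> \<in> set l"
      then obtain j e where e: "e \<in> set es" and mu': "\<mu> = e^j" unfolding Ls_def by auto
      have A: "(e^j)^(p+1) = (e^(p+1))^j" by (metis power_mult mult.commute)
      have B: "e^(p+1) = e" using root e by blast
      show "\<mu> ^ (p + 1) = \<mu>" by (simp only: mu' A B)
    qed
  qed
  have "1 \<in> {1..<p}" using p2 by simp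
  hence Lsum1: "(\<Sum>\<mu>\<leftarrow>L. \<mu>) = complex_of_real P" using LsumT[of 1] by simp
  have "(\<Sum>\<mu>\<leftarrow>L. \<mu>) \<in> \<int>"
    by (rule int_powsum[OF p2 Lroot]) (use LsumT Lsum1 in simp)
  hence PZ: "P \<in> \<int>" using Lsum1 by simp
  have Ppos: "P > 0" unfolding P_def using frpos by (intro prod_pos) auto
  have P1: "P \<ge> 1"
  proof -
    obtain z where z: "P = of_int z" using PZ Ints_cases by blast
    hence "z > 0" using Ppos by simp
    thus ?thesis using z by simp
  qed
  have "0 \<le> ln P" using P1 by simp
  also have "ln P = (\<Sum>j\<in>{1..<p}. ln (fr (m [^] j)))"
    unfolding P_def using frpos by (intro ln_prod) (auto simp: less_imp_neq[symmetric])
  also have "\<dots> \<le> (\<Sum>j\<in>{1..<p}. fr (m [^] j) - 1)"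
    using frpos by (intro sum_mono ln_le_minus_one) auto
  also have "\<dots> = (\<Sum>j\<in>{1..<p}. fr (m [^] j)) - real (p - 1)"
    by (simp add: sum_subtractf)
  finally show ?thesis by simp
qed

end

context stepx
begin

lemma sum_powj:
  assumes j: "j \<in> {1..<p}"
  shows "(\<Sum>m\<in>H-N. fr (m [^] j)) = (\<Sum>m\<in>H-N. fr m)"
proof -
  have oG: "card (carrier G) > 0" using finG by (metis card_gt_0_iff empty_iff one_closed)
  have jp: "\<not> p dvd j" using j by (auto dest: dvd_imp_le)
  obtain k where k: "[k = j] (mod p)" and ck: "coprime k (card (carrier G))"
    using exists_coprime_rep[OF p oG jp] by blast
  have kp: "\<not> p dvd k" using k jp by (metis cong_dvd_iff)
  have kmod: "k mod p = j" using k j unfolding cong_def by simp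
  obtain k' where k': "[k * k' = Suc 0] (mod card (carrier G))" using cong_solve_coprime_nat[OF ck] by blast
  have po: "x [^] card (carrier G) = \<one>" if "x \<in> carrier G" for x
    using pow_order_eq_1[OF that] unfolding Coset.order_def .
  have powcong: "x [^] a = x [^] b" if x: "x \<in> carrier G" and ab: "[a = b] (mod card (carrier G))" for x a b
  proof -
    have "x [^] a = x [^] (a mod card (carrier G)) \<otimes> (x [^] card (carrier G)) [^] (a div card (carrier G))"
      using x by (simp add: nat_pow_pow nat_pow_mult)
    also have "\<dots> = x [^] (a mod card (carrier G))" using x po by simp
    also have "\<dots> = x [^] (b mod card (carrier G))" using ab unfolding cong_def by simp
    also have "\<dots> = x [^] (b mod card (carrier G)) \<otimes> (x [^] card (carrier G)) [^] (b div card (carrier G))"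
      using x po by simp
    also have "\<dots> = x [^] b" using x by (simp add: nat_pow_pow nat_pow_mult)
    finally show ?thesis .
  qed
  have inv_pow: "(x [^] k) [^] k' = x" if x: "x \<in> carrier G" for x
    using powcong[OF x k'] x by (simp add: nat_pow_pow)
  have "(\<Sum>m\<in>H-N. fr (m [^] j)) = (\<Sum>m\<in>H-N. fr (m [^] k))"
  proof (rule sum.cong[OF refl])
    fix m assume "m \<in> H - N"
    hence "m \<in> H" by blast
    thus "fr (m [^] j) = fr (m [^] k)" using fr_pow_mod[of m k] kmod by simp
  qed
  also have "\<dots> = (\<Sum>m\<in>H-N. fr m)"
  proof (rule sum_endo)
    show "finite (H - N)" using finH by simp
    show "inj_on (\<lambda>m. m [^] k) (H - N)"
    proof (rule inj_onI)
      fix x y assume xy: "x \<in> H - N" "y \<in> H - N" "x [^] k = y [^] k"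
      have "x \<in> carrier G" "y \<in> carrier G" using xy HG by auto
      thus "x = y" using inv_pow xy(3) by metis
    qed
    show "(\<lambda>m. m [^] k) ` (H - N) \<subseteq> H - N" using pow_notin kp by auto
  qed
  finally show ?thesis .
qed

lemma sum_HN: "(\<Sum>m\<in>H-N. fr m) \<ge> real (card (H - N))"
proof -
  have p2: "p \<ge> 2" using p prime_ge_2_nat by blast
  have "real (p - 1) * (\<Sum>m\<in>H-N. fr m) = (\<Sum>j\<in>{1..<p}. \<Sum>m\<in>H-N. fr m)" by simp
  also have "\<dots> = (\<Sum>j\<in>{1..<p}. \<Sum>m\<in>H-N. fr (m [^] j))"
    using sum_powj by simp
  also have "\<dots> = (\<Sum>m\<in>H-N. \<Sum>j\<in>{1..<p}. fr (m [^] j))" by (rule sum.swap)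
  also have "\<dots> \<ge> (\<Sum>m\<in>H-N. real (p - 1))"
    using elem_ineq by (intro sum_mono) auto
  finally have "real (p - 1) * (\<Sum>m\<in>H-N. fr m) \<ge> real (p - 1) * real (card (H - N))" by (simp add: mult.commute)
  moreover have "real (p - 1) > 0" using p2 by simp
  ultimately show ?thesis by simp
qed

lemma step_ineq:
  "(\<Sum>x\<in>N. Re (\<psi> x)) - real (card N) \<le> (\<Sum>x\<in>H. Re (\<psi> x)) - real (card H)"
proof -
  have c: "real (card N) > 0" using cardN by simp
  have sH: "(\<Sum>m\<in>H. fr m) = (\<Sum>x\<in>H. Re (\<psi> x))"
  proof -
    have "(\<Sum>m\<in>H. fr m) = (\<Sum>m\<in>H. \<Sum>n\<in>N. Re (\<psi> (m \<otimes> n))) / real (card N)"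
      unfolding fr_def by (simp add: sum_divide_distrib)
    also have "(\<Sum>m\<in>H. \<Sum>n\<in>N. Re (\<psi> (m \<otimes> n))) = (\<Sum>n\<in>N. \<Sum>m\<in>H. Re (\<psi> (m \<otimes> n)))"
      by (rule sum.swap)
    also have "\<dots> = (\<Sum>n\<in>N. \<Sum>x\<in>H. Re (\<psi> x))"
    proof (rule sum.cong[OF refl])
      fix n assume n: "n \<in> N"
      have nH: "n \<in> H" using n NH by blast
      have nG: "n \<in> carrier G" using n NG by blast
      show "(\<Sum>m\<in>H. Re (\<psi> (m \<otimes> n))) = (\<Sum>x\<in>H. Re (\<psi> x))"
      proof (rule sum_endo[OF finH])
        show "inj_on (\<lambda>m. m \<otimes> n) H" using nG HG by (auto simp: inj_on_def subset_iff)
        show "(\<lambda>m. m \<otimes> n) ` H \<subseteq> H" using nH subgroup.m_closed[OF subH] by auto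
      qed
    qed
    also have "\<dots> = real (card N) * (\<Sum>x\<in>H. Re (\<psi> x))" by simp
    finally show ?thesis using c by simp
  qed
  have sN: "(\<Sum>m\<in>N. fr m) = (\<Sum>x\<in>N. Re (\<psi> x))"
  proof -
    have "(\<Sum>m\<in>N. fr m) = (\<Sum>m\<in>N. fr \<one>)"
    proof (rule sum.cong[OF refl])
      fix m assume "m \<in> N"
      thus "fr m = fr \<one>" using fr_right[of \<one> m] NG by auto
    qed
    also have "\<dots> = real (card N) * ((\<Sum>n\<in>N. Re (\<psi> n)) / real (card N))"
      unfolding fr_def using NG by (simp add: subset_iff)
    finally show ?thesis using c by simp
  qed
  have "(\<Sum>m\<in>H. fr m) = (\<Sum>m\<in>N. fr m) + (\<Sum>m\<in>H-N. fr m)"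
    using sum.subset_diff[OF NH finH, of fr] by linarith
  moreover have "real (card (H - N)) = real (card H) - real (card N)"
    using card_Diff_subset[OF finN NH] card_mono[OF finH NH] by simp
  ultimately show ?thesis using sH sN sum_HN by linarith
qed

end

lemma (in group) cancel1: "x \<in> carrier G \<Longrightarrow> z \<in> carrier G \<Longrightarrow> x \<otimes> (inv x \<otimes> z) = z"
  by (simp add: m_assoc[symmetric])
lemma (in group) cancel2: "x \<in> carrier G \<Longrightarrow> z \<in> carrier G \<Longrightarrow> inv x \<otimes> (x \<otimes> z) = z"
  by (simp add: m_assoc[symmetric])

locale abpair = group G for G :: "('a, 'b) monoid_scheme" (structure) +
  fixes A B :: "'a set"
  assumes subA: "subgroup A G" and subB: "subgroup B G" and BA: "B \<subseteq> A"
    and comm: "\<And>x y. x \<in> A \<Longrightarrow> y \<in> A \<Longrightarrow> x \<otimes> y \<otimes> inv x \<otimes> inv y \<in> B"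
begin

lemma AG: "A \<subseteq> carrier G" using subA subgroup.subset by blast
lemma BG: "B \<subseteq> carrier G" using subB subgroup.subset by blast

lemma normS:
  assumes S: "subgroup S G" "B \<subseteq> S" "S \<subseteq> A" and a: "a \<in> A" and s: "s \<in> S"
  shows "a \<otimes> s \<otimes> inv a \<in> S"
proof -
  have sA: "s \<in> A" using s S by blast
  have aG: "a \<in> carrier G" and sG: "s \<in> carrier G" using a sA AG by auto
  have "a \<otimes> s \<otimes> inv a = (a \<otimes> s \<otimes> inv a \<otimes> inv s) \<otimes> s"
    using aG sG by (simp add: m_assoc)
  moreover have "a \<otimes> s \<otimes> inv a \<otimes> inv s \<in> S" using comm[OF a sA] S by blast
  ultimately have "(a \<otimes> s \<otimes> inv a \<otimes> inv s) \<otimes> s \<in> S" using subgroup.m_closed[OF S(1)] s by blast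
  thus ?thesis using \<open>a \<otimes> s \<otimes> inv a = (a \<otimes> s \<otimes> inv a \<otimes> inv s) \<otimes> s\<close> by simp
qed

lemma normB: "a \<in> A \<Longrightarrow> b \<in> B \<Longrightarrow> a \<otimes> b \<otimes> inv a \<in> B"
  using normS[OF subB subset_refl BA] .

lemma swap:
  assumes x: "x \<in> A" and y: "y \<in> A"
  shows "\<exists>c\<in>B. x \<otimes> y = y \<otimes> x \<otimes> c"
proof -
  have xG: "x \<in> carrier G" and yG: "y \<in> carrier G" using x y AG by auto
  have ix: "inv x \<in> A" and iy: "inv y \<in> A" using x y subgroup.m_inv_closed[OF subA] by auto
  define c where "c = inv x \<otimes> inv y \<otimes> inv (inv x) \<otimes> inv (inv y)"
  have cB: "c \<in> B" unfolding c_def using comm[OF ix iy] .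
  have "y \<otimes> x \<otimes> c = x \<otimes> y" unfolding c_def using xG yG by (simp add: m_assoc cancel1)
  thus ?thesis using cB by metis
qed

lemma powprod:
  assumes x: "x \<in> A" and y: "y \<in> A"
  shows "\<exists>c\<in>B. (x \<otimes> y) [^] (n::nat) = x [^] n \<otimes> (y [^] n \<otimes> c)"
proof (induction n)
  case 0
  then show ?case using subgroup.one_closed[OF subB] by (intro bexI[of _ \<one>]) auto
next
  case (Suc n)
  have xG: "x \<in> carrier G" and yG: "y \<in> carrier G" using x y AG by auto
  obtain c where c: "c \<in> B" "(x \<otimes> y) [^] n = x [^] n \<otimes> (y [^] n \<otimes> c)" using Suc by blast
  have cG: "c \<in> carrier G" using c BG by blast
  define w where "w = y [^] n \<otimes> c"
  have wA: "w \<in> A" unfolding w_def using subgroup_pow_closed[OF subA y] c BA subgroup.m_closed[OF subA] by blast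
  have wG: "w \<in> carrier G" using wA AG by blast
  obtain c1 where c1: "c1 \<in> B" "w \<otimes> x = x \<otimes> w \<otimes> c1" using swap[OF wA x] by blast
  have c1G: "c1 \<in> carrier G" using c1 BG by blast
  define c2 where "c2 = inv y \<otimes> (c \<otimes> c1) \<otimes> inv (inv y)"
  have iy: "inv y \<in> A" using y subgroup.m_inv_closed[OF subA] by auto
  have c2B: "c2 \<in> B" unfolding c2_def using normB[OF iy] subgroup.m_closed[OF subB c(1) c1(1)] by blast
  have "(x \<otimes> y) [^] Suc n = x [^] n \<otimes> w \<otimes> (x \<otimes> y)"
    using c xG yG unfolding w_def by (simp add: m_assoc)
  also have "\<dots> = x [^] n \<otimes> (w \<otimes> x) \<otimes> y" using xG yG wG by (simp add: m_assoc)
  also have "\<dots> = x [^] n \<otimes> (x \<otimes> w \<otimes> c1) \<otimes> y" using c1 by simp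
  also have "\<dots> = x [^] Suc n \<otimes> (y [^] Suc n \<otimes> c2)"
    unfolding c2_def w_def using xG yG cG c1G
    by (simp add: m_assoc nat_pow_Suc2 cancel1 del: nat_pow_Suc)
  finally show ?case using c2B by blast
qed

definition K :: "nat \<Rightarrow> 'a set" where
  "K m = generate G (B \<union> (\<lambda>x. x [^] m) ` A)"

lemma gens_sub: "B \<union> (\<lambda>x. x [^] (m::nat)) ` A \<subseteq> carrier G"
proof -
  have "(\<lambda>x. x [^] m) ` A \<subseteq> carrier G" using AG by (auto simp: subset_iff)
  thus ?thesis using BG by blast
qed

lemma K_sub: "subgroup (K m) G" unfolding K_def by (rule generate_is_subgroup[OF gens_sub])

lemma B_K: "B \<subseteq> K m" unfolding K_def by (auto intro: generate.incl)

lemma pow_K: "x \<in> A \<Longrightarrow> x [^] m \<in> K m" unfolding K_def by (auto intro: generate.incl)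

lemma K_A: "K m \<subseteq> A"
  unfolding K_def using BA subgroup_pow_closed[OF subA] by (intro generate_subgroup_incl[OF _ subA]) auto

lemma K1: "K 1 = A"
proof
  show "K 1 \<subseteq> A" by (rule K_A)
  show "A \<subseteq> K 1"
  proof
    fix x assume "x \<in> A"
    moreover hence "x [^] (1::nat) = x" using AG by auto
    ultimately show "x \<in> K 1" using pow_K[of x 1] by simp
  qed
qed

lemma K_order:
  assumes "finite (carrier G)"
  shows "K (card (carrier G)) = B"
proof
  show "B \<subseteq> K (card (carrier G))" by (rule B_K)
  have "x [^] card (carrier G) = \<one>" if "x \<in> A" for x
    using pow_order_eq_1[of x] that AG unfolding Coset.order_def by auto
  thus "K (card (carrier G)) \<subseteq> B"
    unfolding K_def using subgroup.one_closed[OF subB] by (intro generate_subgroup_incl[OF _ subB]) auto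
qed

lemma K_mono: "K (m * q) \<subseteq> K m"
proof -
  have "(\<lambda>x. x [^] (m*q)) ` A \<subseteq> K m"
  proof
    fix z assume "z \<in> (\<lambda>x. x [^] (m*q)) ` A"
    then obtain x where x: "x \<in> A" "z = x [^] (m*q)" by blast
    have xG: "x \<in> carrier G" using x AG by blast
    have "z = (x [^] q) [^] m" using x xG by (simp add: nat_pow_pow mult.commute)
    moreover have "x [^] q \<in> A" using subgroup_pow_closed[OF subA x(1)] .
    ultimately show "z \<in> K m" using pow_K by simp
  qed
  thus ?thesis unfolding K_def[of "m*q"] using B_K[of m]
    by (intro generate_subgroup_incl[OF _ K_sub]) auto
qed

lemma K_norm: "h \<in> K m \<Longrightarrow> n \<in> K (m*q) \<Longrightarrow> h \<otimes> n \<otimes> inv h \<in> K (m*q)"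
  using normS[OF K_sub B_K K_A] K_A by blast

lemma K_pow:
  assumes z: "z \<in> K m"
  shows "z [^] q \<in> K (m*q)"
proof -
  have gen: "h [^] q \<in> K (m*q)" if h: "h \<in> B \<union> (\<lambda>x. x [^] m) ` A" for h
  proof (cases "h \<in> B")
    case True
    then show ?thesis using subgroup_pow_closed[OF subB True] B_K by blast
  next
    case False
    then obtain x where x: "x \<in> A" "h = x [^] m" using h by blast
    have xG: "x \<in> carrier G" using x AG by blast
    have "h [^] q = x [^] (m*q)" using x xG by (simp add: nat_pow_pow)
    thus ?thesis using pow_K[OF x(1)] by simp
  qed
  from z[unfolded K_def] show ?thesis
  proof (induction rule: generate.induct)
    case one
    then show ?case using subgroup.one_closed[OF K_sub] by simp
  next
    case (incl h)
    then show ?case using gen by blast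
  next
    case (inv h)
    have hG: "h \<in> carrier G" using inv gens_sub by blast
    have "(inv h) [^] q = inv (h [^] q)" using hG by (rule nat_pow_inv)
    then show ?case using gen[OF inv] subgroup.m_inv_closed[OF K_sub] by simp
  next
    case (eng h1 h2)
    have h1: "h1 \<in> K m" and h2: "h2 \<in> K m" using eng unfolding K_def by auto
    have h1A: "h1 \<in> A" and h2A: "h2 \<in> A" using h1 h2 K_A by auto
    obtain c where c: "c \<in> B" "(h1 \<otimes> h2) [^] q = h1 [^] q \<otimes> (h2 [^] q \<otimes> c)"
      using powprod[OF h1A h2A] by blast
    have "c \<in> K (m*q)" using c B_K by blast
    then show ?case using c eng subgroup.m_closed[OF K_sub] by simp
  qed
qed

end

context scx
begin

definition E :: "'a set \<Rightarrow> real" where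
  "E S = (\<Sum>x\<in>S. Re (\<psi> x)) - real (card S)"

lemma step_E:
  assumes "subgroup H G" "subgroup N G" "N \<subseteq> H"
    "\<And>h n. h \<in> H \<Longrightarrow> n \<in> N \<Longrightarrow> h \<otimes> n \<otimes> inv h \<in> N"
    "prime (q::nat)" "\<And>m. m \<in> H \<Longrightarrow> m [^] q \<in> N"
  shows "E N \<le> E H"
proof -
  have ax: "stepx_axioms G H N q" by (rule stepx_axioms.intro) (use assms in auto)
  interpret S: stepx G d \<rho> \<psi> H N q by intro_locales (rule ax)
  show ?thesis using S.step_ineq unfolding E_def .
qed

lemma pair_E:
  assumes ab: "abpair G A B"
  shows "E B \<le> E A"
proof -
  interpret P: abpair G A B by (rule ab)
  have main: "E (P.K m) \<le> E A" if "m \<ge> 1" for m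
    using that
  proof (induction m rule: less_induct)
    case (less m)
    show ?case
    proof (cases "m = 1")
      case True
      then show ?thesis using P.K1 by simp
    next
      case False
      then obtain q where q: "prime q" "q dvd m" using prime_factor_nat by blast
      then obtain m' where m': "m = m' * q" by (metis dvd_def mult.commute)
      have "m' \<ge> 1" using m' less.prems by (cases m') auto
      moreover have "m' < m" using m' q(1) less.prems prime_gt_1_nat by (metis calculation less_le_trans mult.right_neutral nat_mult_less_cancel1 not_one_le_zero linorder_not_le less_one)
      ultimately have IH: "E (P.K m') \<le> E A" using less.IH by blast
      have "E (P.K (m' * q)) \<le> E (P.K m')"
      proof (rule step_E[OF P.K_sub P.K_sub P.K_mono _ q(1)])
        show "\<And>h n. h \<in> P.K m' \<Longrightarrow> n \<in> P.K (m' * q) \<Longrightarrow> h \<otimes> n \<otimes> inv h \<in> P.K (m' * q)"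
          by (rule P.K_norm)
        show "\<And>z. z \<in> P.K m' \<Longrightarrow> z [^] q \<in> P.K (m' * q)" by (rule P.K_pow)
      qed
      thus ?thesis using IH m' by simp
    qed
  qed
  have "card (carrier G) \<ge> 1" using finG by (metis card_0_eq empty_iff less_one not_le one_closed)
  thus ?thesis using main P.K_order[OF finG] by metis
qed

lemma derived_E:
  assumes "solvable G"
  shows "E {\<one>} \<le> E (carrier G)"
proof -
  define D where "D i = (derived G ^^ i) (carrier G)" for i
  have subD: "subgroup (D i) G" for i unfolding D_def by (rule exp_of_derived_is_subgroup[OF subgroup_self])
  have "E (D i) \<le> E (carrier G)" for i
  proof (induction i)
    case 0
    then show ?case unfolding D_def by simp
  next
    case (Suc i)
    have DS: "D (Suc i) = derived G (D i)" unfolding D_def by simp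
    have "abpair G (D i) (D (Suc i))"
    proof (rule abpair.intro[OF is_group], rule abpair_axioms.intro)
      show "subgroup (D i) G" by (rule subD)
      show "subgroup (D (Suc i)) G" by (rule subD)
      show "D (Suc i) \<subseteq> D i" unfolding DS by (rule derived_incl[OF subset_refl subD])
      show "\<And>x y. x \<in> D i \<Longrightarrow> y \<in> D i \<Longrightarrow> x \<otimes> y \<otimes> inv x \<otimes> inv y \<in> D (Suc i)"
        unfolding DS derived_def by (auto intro: generate.incl)
    qed
    then show ?case using pair_E Suc by fastforce
  qed
  moreover obtain n where "D n = {\<one>}" using assms solvable_iff_trivial_derived_seq unfolding D_def by blast
  ultimately show ?thesis by metis
qed

end

lemma (in group) main_thm:
  fixes \<psi> :: "'a \<Rightarrow> complex"
  assumes "finite (carrier G)" and "solvable G"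
    and "ordinary_S_character G \<psi>"
    and "\<exists>g\<in>carrier G. \<psi> g \<noteq> 1"
  shows "\<exists>g\<in>carrier G. \<exists>p k. prime (p::nat) \<and> k \<ge> 1 \<and> ord g = p ^ k \<and> \<psi> g = 0"
proof (rule ccontr)
  assume neg: "\<not> ?thesis"
  have finG: "finite (carrier G)" by fact
  from assms(3) obtain n \<rho> where rep: "is_rep G n \<rho>" and tr: "\<forall>g\<in>carrier G. \<psi> g = mat_trace (\<rho> g)"
    and inner: "char_inner G \<psi> (\<lambda>_. 1) = 1"
    and rl: "\<forall>g\<in>carrier G. \<psi> g \<in> \<real> \<and> 0 \<le> Re (\<psi> g)"
    unfolding ordinary_S_character_def is_character_def by blast
  have ax: "scx_axioms G n \<rho> \<psi>"
  proof (rule scx_axioms.intro)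
    show "finite (carrier G)" by fact
    show "is_rep G n \<rho>" by fact
    show "\<And>g. g \<in> carrier G \<Longrightarrow> \<psi> g = mat_trace (\<rho> g)" using tr by blast
    show "\<And>g. g \<in> carrier G \<Longrightarrow> \<psi> g = complex_of_real (Re (\<psi> g))" using rl by (simp add: of_real_Re)
    show "\<And>g. g \<in> carrier G \<Longrightarrow> 0 \<le> Re (\<psi> g)" using rl by blast
    show "\<And>g q k. g \<in> carrier G \<Longrightarrow> prime (q::nat) \<Longrightarrow> k \<ge> 1 \<Longrightarrow> ord g = q^k \<Longrightarrow> \<psi> g \<noteq> 0"
      using neg by blast
  qed
  interpret S: scx G n \<rho> \<psi> by intro_locales (rule ax)
  have cpos: "card (carrier G) > 0" using finG by (metis card_gt_0_iff empty_iff one_closed)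
  have sum_psi: "(\<Sum>g\<in>carrier G. \<psi> g) = of_nat (card (carrier G))"
    using inner cpos unfolding char_inner_def Coset.order_def by (simp add: divide_eq_1_iff)
  have sumRe: "(\<Sum>g\<in>carrier G. Re (\<psi> g)) = real (card (carrier G))"
    using arg_cong[OF sum_psi, of Re] by (simp add: Re_sum)
  have EG: "S.E (carrier G) = 0" unfolding S.E_def using sumRe by simp
  have psi1: "\<psi> \<one> = of_nat n"
    using tr S.rho_one unfolding mat_trace_def by simp
  have "S.E {\<one>} \<le> S.E (carrier G)" using S.derived_E assms(2) by blast
  hence "real n - 1 \<le> 0" using EG psi1 unfolding S.E_def by simp
  hence n1: "n \<le> 1" by simp
  show False
  proof (cases "n = 0")
    case True
    have "\<psi> g = 0" if "g \<in> carrier G" for g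
      using tr that S.rho_car[OF that] True unfolding mat_trace_def by simp
    hence "(\<Sum>g\<in>carrier G. Re (\<psi> g)) = 0" by simp
    thus False using sumRe cpos by simp
  next
    case False
    hence n: "n = 1" using n1 by simp
    have tr1: "\<psi> g = \<rho> g $$ (0,0)" if "g \<in> carrier G" for g
      using tr that S.rho_car[OF that] n unfolding mat_trace_def by simp
    have mult: "\<psi> (g \<otimes> h) = \<psi> g * \<psi> h" if "g \<in> carrier G" "h \<in> carrier G" for g h
    proof -
      have "\<psi> (g \<otimes> h) = (\<rho> g * \<rho> h) $$ (0,0)" using tr1 that S.rho_mult by simp
      also have "\<dots> = \<rho> g $$ (0,0) * \<rho> h $$ (0,0)"
        using S.rho_car[OF that(1)] S.rho_car[OF that(2)] n
        by (simp add: index_mult_mat scalar_prod_def)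
      finally show ?thesis using tr1 that by simp
    qed
    have pw: "\<psi> (g [^] k) = \<psi> g ^ k" if g: "g \<in> carrier G" for g and k :: nat
    proof (induction k)
      case 0
      then show ?case using psi1 n by simp
    next
      case (Suc k)
      then show ?case using mult[of "g [^] k" g] g by simp
    qed
    have all1: "\<psi> g = 1" if g: "g \<in> carrier G" for g
    proof -
      have og: "ord g > 0" using ord_ge_1[OF finG g] by linarith
      have e1: "\<psi> (g [^] ord g) = \<psi> g ^ ord g" by (rule pw[OF g])
      have e2: "g [^] ord g = \<one>" using g by (rule pow_ord_eq_1)
      have e: "\<psi> g ^ ord g = 1" using e1 unfolding e2 psi1 n by simp
      have r: "complex_of_real (Re (\<psi> g)) = \<psi> g" using rl g by (simp add: of_real_Re)
      have "complex_of_real (Re (\<psi> g) ^ ord g) = 1" by (simp only: of_real_power r e)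
      hence A1: "Re (\<psi> g) ^ ord g = 1 ^ ord g" by (simp only: of_real_eq_1_iff power_one)
      have A2: "0 \<le> Re (\<psi> g)" using rl g by blast
      have A3: "(0::real) \<le> 1" by simp
      have "Re (\<psi> g) = 1" by (rule power_eq_imp_eq_base[OF A1 A2 A3 og])
      hence "\<psi> g = complex_of_real 1" using r by (metis)
      thus ?thesis by (simp only: of_real_1)
    qed
    thus False using assms(4) by blast
  qed
qed

theorem proposition3p2:
  fixes G :: "('a, 'b) monoid_scheme" and \<psi> :: "'a \<Rightarrow> complex"
  assumes "group G" and "finite (carrier G)" and "solvable G"
    and "ordinary_S_character G \<psi>"
    and "\<exists>g\<in>carrier G. \<psi> g \<noteq> 1"
  shows "\<exists>g\<in>carrier G. \<exists>p k. prime (p::nat) \<and> k \<ge> 1 \<and> group.ord G g = p ^ k \<and> \<psi> g = 0"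
  using group.main_thm[OF assms(1) assms(2-5)] .

end
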